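(* Work in a polymorphically typed functional language (a polymorphic lambda-calculus with Haskell-like datatypes; possibly with undefinedness $\bot$ and partial functions, and possibly with Haskell's $\mathit{seq}$) for which the relational parametricity theorem holds. Let $\tau$, $\tau_1$, $\tau_2$ be closed types, and let $g :: \tau_1 \to \tau_2$ be a closed term which is (i) strict, if the language setting includes partially defined functions, and (ii) strict and total, if the language setting includes $\mathit{seq}$. Let $e :: \tau$ be a term which may involve the type variable $\alpha$ (but $\alpha$ does not occur in its overall type $\tau$, which is closed) and which may contain the term variables $\mathit{pre} :: \tau_1 \to \alpha$ and $\mathit{post} :: \alpha \to \tau_2$, but no other free (type or term) variables. Then \[ e[\tau_1/\alpha,\ \mathit{id}_{\tau_1}/\mathit{pre},\ g/\mathit{post}] \;=\; e[\tau_2/\alpha,\ g/\mathit{pre},\ \mathit{id}_{\tau_2}/\mathit{post}], \] where $e[\cdot/\cdot]$ denotes simultaneous substitution and $=$ is semantic equality.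
   Context: The relational parametricity theorem (fundamental lemma of logical relations) is assumed to hold for the language: types are interpreted as relations $\Delta_{\rho,\sigma}$, with base types as identity relations, function types via $(f,g)\in \mathcal{R}_1\to\mathcal{R}_2$ iff $f$ maps $\mathcal{R}_1$-related arguments to $\mathcal{R}_2$-related results (with the additional requirement $f=\bot \Leftrightarrow g=\bot$ when $\mathit{seq}$ is present), datatype constructors via corresponding relational liftings, and type variables interpreted by admissible relations $\mathcal{R}$ between closed types (strict, i.e. $(\bot,\bot)\in\mathcal{R}$, in the presence of partiality; strict and total, i.e. $(a,b)\in\mathcal{R}$ implies $a=\bot\Leftrightarrow b=\bot$, in the presence of $\mathit{seq}$); the theorem says every term, with free term variables instantiated by related closed terms, is related to itself at the relational interpretation of its type, and for closed types this relation is the identity. A function $g$ is strict if $g\,\bot=\bot$, and total if $g\,x=\bot$ implies $x=\bot$. $\mathit{id}_{\tau}$ denotes the identity function on type $\tau$. *)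

theory Defs
  imports Main
begin

datatype setting = Total | Partial | WithSeq

text \<open>Type syntax: type variables, base types, function types, datatype constructors
  applied to argument types. The distinguished type variable alpha is TVar 0.\<close>
datatype ('b, 'c) ty =
    TVar nat
  | TBase 'b
  | TFun "('b, 'c) ty" "('b, 'c) ty"
  | TCon 'c "('b, 'c) ty list"

fun closed :: "('b, 'c) ty \<Rightarrow> bool" where
  "closed (TVar n) = False"
| "closed (TBase b) = True"
| "closed (TFun t1 t2) = (closed t1 \<and> closed t2)"
| "closed (TCon c ts) = (\<forall>t\<in>set ts. closed t)"

record ('v, 'b, 'c) lang =
  bottom :: 'v
  app :: "'v \<Rightarrow> 'v \<Rightarrow> 'v"
  below :: "'v \<Rightarrow> 'v \<Rightarrow> bool"
  base_dom :: "'b \<Rightarrow> 'v set"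
  con_rel :: "'c \<Rightarrow> 'v rel list \<Rightarrow> 'v rel"

fun rel :: "('v, 'b, 'c) lang \<Rightarrow> setting \<Rightarrow> (nat \<Rightarrow> 'v rel) \<Rightarrow> ('b, 'c) ty \<Rightarrow> 'v rel" where
  "rel L s \<rho> (TVar n) = \<rho> n"
| "rel L s \<rho> (TBase b) = Id_on (base_dom L b)"
| "rel L s \<rho> (TFun t1 t2) =
     {(f, h). (\<forall>a b. (a, b) \<in> rel L s \<rho> t1 \<longrightarrow> (app L f a, app L h b) \<in> rel L s \<rho> t2)
            \<and> (s = WithSeq \<longrightarrow> (f = bottom L \<longleftrightarrow> h = bottom L))}"
| "rel L s \<rho> (TCon c ts) = con_rel L c (map (rel L s \<rho>) ts)"

definition vals :: "('v, 'b, 'c) lang \<Rightarrow> setting \<Rightarrow> ('b, 'c) ty \<Rightarrow> 'v set" where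
  "vals L s \<tau> = {x. (x, x) \<in> rel L s (\<lambda>_. {}) \<tau>}"

definition is_chain :: "('v, 'b, 'c) lang \<Rightarrow> (nat \<Rightarrow> 'v) \<Rightarrow> bool" where
  "is_chain L X \<longleftrightarrow> (\<forall>i. below L (X i) (X (Suc i)))"

definition lub_of :: "('v, 'b, 'c) lang \<Rightarrow> 'v set \<Rightarrow> 'v \<Rightarrow> bool" where
  "lub_of L S x \<longleftrightarrow> (\<forall>y\<in>S. below L y x) \<and> (\<forall>u. (\<forall>y\<in>S. below L y u) \<longrightarrow> below L x u)"

definition adm_rel :: "('v, 'b, 'c) lang \<Rightarrow> 'v rel \<Rightarrow> bool" where
  "adm_rel L R \<longleftrightarrow> (\<forall>X Y x y. (\<forall>i. (X i, Y i) \<in> R) \<longrightarrow> is_chain L X \<longrightarrow> is_chain L Y \<longrightarrow>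
      lub_of L (range X) x \<longrightarrow> lub_of L (range Y) y \<longrightarrow> (x, y) \<in> R)"

definition allowed :: "('v, 'b, 'c) lang \<Rightarrow> setting \<Rightarrow> 'v rel \<Rightarrow> bool" where
  "allowed L s R \<longleftrightarrow>
     (s \<noteq> Total \<longrightarrow> adm_rel L R \<and> (bottom L, bottom L) \<in> R) \<and>
     (s = WithSeq \<longrightarrow> (\<forall>(a, b)\<in>R. a = bottom L \<longleftrightarrow> b = bottom L))"

text \<open>Standing properties of the language: identity extension (for closed types the
  relational interpretation is the identity) and, in the partial settings, basic
  domain-theoretic facts (antisymmetric order, bottom in every type, value sets closed
  under lubs of chains, continuity of application).\<close>
definition lang_wf :: "('v, 'b, 'c) lang \<Rightarrow> setting \<Rightarrow> bool" where
  "lang_wf L s \<longleftrightarrow>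
     (\<forall>\<rho> \<tau> x y. closed \<tau> \<longrightarrow> (x, y) \<in> rel L s \<rho> \<tau> \<longrightarrow> x = y) \<and>
     (s \<noteq> Total \<longrightarrow>
        (\<forall>x y. below L x y \<longrightarrow> below L y x \<longrightarrow> x = y) \<and>
        (\<forall>\<tau>. closed \<tau> \<longrightarrow> bottom L \<in> vals L s \<tau>) \<and>
        (\<forall>\<tau> X x. closed \<tau> \<longrightarrow> is_chain L X \<longrightarrow> range X \<subseteq> vals L s \<tau> \<longrightarrow>
            lub_of L (range X) x \<longrightarrow> x \<in> vals L s \<tau>) \<and>
        (\<forall>\<tau>1 \<tau>2 f X x. closed \<tau>1 \<longrightarrow> closed \<tau>2 \<longrightarrow> f \<in> vals L s (TFun \<tau>1 \<tau>2) \<longrightarrow>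
            is_chain L X \<longrightarrow> range X \<subseteq> vals L s \<tau>1 \<longrightarrow> lub_of L (range X) x \<longrightarrow>
            lub_of L (range (\<lambda>i. app L f (X i))) (app L f x)))"

text \<open>The fundamental lemma (relational parametricity) instantiated for the term e,
  given by its denotation E: the type substituted for alpha (TVar 0), the values of
  pre :: tau1 -> alpha and post :: alpha -> tau2.\<close>
definition parametric_term ::
  "('v, 'b, 'c) lang \<Rightarrow> setting \<Rightarrow> ('b, 'c) ty \<Rightarrow> ('b, 'c) ty \<Rightarrow> ('b, 'c) ty
     \<Rightarrow> (('b, 'c) ty \<Rightarrow> 'v \<Rightarrow> 'v \<Rightarrow> 'v) \<Rightarrow> bool" where
  "parametric_term L s \<tau>1 \<tau>2 \<tau> E \<longleftrightarrow>
     (\<forall>A B R p p' q q'. closed A \<longrightarrow> closed B \<longrightarrow> R \<subseteq> vals L s A \<times> vals L s B \<longrightarrow>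
        allowed L s R \<longrightarrow>
        (p, p') \<in> rel L s (\<lambda>_. R) (TFun \<tau>1 (TVar 0)) \<longrightarrow>
        (q, q') \<in> rel L s (\<lambda>_. R) (TFun (TVar 0) \<tau>2) \<longrightarrow>
        (E A p q, E B p' q') \<in> rel L s (\<lambda>_. R) \<tau>)"

definition strict_fun :: "('v, 'b, 'c) lang \<Rightarrow> 'v \<Rightarrow> bool" where
  "strict_fun L g \<longleftrightarrow> app L g (bottom L) = bottom L"

definition total_fun :: "('v, 'b, 'c) lang \<Rightarrow> setting \<Rightarrow> ('b, 'c) ty \<Rightarrow> 'v \<Rightarrow> bool" where
  "total_fun L s \<tau>1 g \<longleftrightarrow> (\<forall>x\<in>vals L s \<tau>1. app L g x = bottom L \<longrightarrow> x = bottom L)"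

end

theory Submission
  imports Defs
begin

lemma rel_closed: "closed t \<Longrightarrow> rel L s \<rho> t = rel L s \<rho>' t"
proof (induction t)
  case (TCon c ts)
  then have "map (rel L s \<rho>) ts = map (rel L s \<rho>') ts"
    by (intro list.map_cong0) auto
  then show ?case by (simp only: rel.simps)
qed auto

theorem lemma1:
  fixes L :: "('v, 'b, 'c) lang" and s :: setting
    and \<tau> \<tau>1 \<tau>2 :: "('b, 'c) ty"
    and E :: "('b, 'c) ty \<Rightarrow> 'v \<Rightarrow> 'v \<Rightarrow> 'v"
    and g id1 id2 :: 'v
  assumes wf: "lang_wf L s"
    and cl: "closed \<tau>" "closed \<tau>1" "closed \<tau>2"
    and param: "parametric_term L s \<tau>1 \<tau>2 \<tau> E"
    and g_ty: "g \<in> vals L s (TFun \<tau>1 \<tau>2)"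
    and id1: "id1 \<in> vals L s (TFun \<tau>1 \<tau>1)" "\<forall>x\<in>vals L s \<tau>1. app L id1 x = x"
    and id2: "id2 \<in> vals L s (TFun \<tau>2 \<tau>2)" "\<forall>x\<in>vals L s \<tau>2. app L id2 x = x"
    and strict: "s \<noteq> Total \<longrightarrow> strict_fun L g"
    and total: "s = WithSeq \<longrightarrow> total_fun L s \<tau>1 g \<and> g \<noteq> bottom L
                  \<and> id1 \<noteq> bottom L \<and> id2 \<noteq> bottom L"
  shows "E \<tau>1 id1 g = E \<tau>2 g id2"
proof -
  define R where "R = {(x, app L g x) | x. x \<in> vals L s \<tau>1}"
  let ?\<rho> = "\<lambda>_::nat. R"
  have gapp: "app L g x \<in> vals L s \<tau>2" if "x \<in> vals L s \<tau>1" for x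
    using g_ty that by (auto simp: vals_def)
  have r1: "rel L s ?\<rho> \<tau>1 = rel L s (\<lambda>_. {}) \<tau>1" using cl rel_closed by blast
  have r2: "rel L s ?\<rho> \<tau>2 = rel L s (\<lambda>_. {}) \<tau>2" using cl rel_closed by blast
  have eqc: "\<And>\<rho> t x y. closed t \<Longrightarrow> (x, y) \<in> rel L s \<rho> t \<Longrightarrow> x = y"
    using wf unfolding lang_wf_def by blast
  have sub: "R \<subseteq> vals L s \<tau>1 \<times> vals L s \<tau>2" using gapp by (auto simp: R_def)
  have allowed: "allowed L s R"
  proof -
    have A: "adm_rel L R \<and> (bottom L, bottom L) \<in> R" if "s \<noteq> Total"
    proof
      have W: "(\<forall>x y. below L x y \<longrightarrow> below L y x \<longrightarrow> x = y) \<and>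
        (\<forall>\<tau>. closed \<tau> \<longrightarrow> bottom L \<in> vals L s \<tau>) \<and>
        (\<forall>\<tau> X x. closed \<tau> \<longrightarrow> is_chain L X \<longrightarrow> range X \<subseteq> vals L s \<tau> \<longrightarrow>
            lub_of L (range X) x \<longrightarrow> x \<in> vals L s \<tau>) \<and>
        (\<forall>\<tau>1 \<tau>2 f X x. closed \<tau>1 \<longrightarrow> closed \<tau>2 \<longrightarrow> f \<in> vals L s (TFun \<tau>1 \<tau>2) \<longrightarrow>
            is_chain L X \<longrightarrow> range X \<subseteq> vals L s \<tau>1 \<longrightarrow> lub_of L (range X) x \<longrightarrow>
            lub_of L (range (\<lambda>i. app L f (X i))) (app L f x))"
        using wf that unfolding lang_wf_def by blast
      show "adm_rel L R"
        unfolding adm_rel_def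
      proof (intro allI impI)
        fix X Y x y
        assume XY: "\<forall>i. (X i, Y i) \<in> R" and cX: "is_chain L X" and cY: "is_chain L Y"
          and lx: "lub_of L (range X) x" and ly: "lub_of L (range Y) y"
        have Xv: "range X \<subseteq> vals L s \<tau>1" and Yi: "\<And>i. Y i = app L g (X i)"
          using XY by (auto simp: R_def)
        have xv: "x \<in> vals L s \<tau>1" using W cl cX Xv lx by blast
        have "lub_of L (range (\<lambda>i. app L g (X i))) (app L g x)"
          using W cl g_ty cX Xv lx by blast
        moreover have "range Y = range (\<lambda>i. app L g (X i))" using Yi by auto
        ultimately have "y = app L g x" using ly W unfolding lub_of_def by metis
        then show "(x, y) \<in> R" using xv by (auto simp: R_def)
      qed
      show "(bottom L, bottom L) \<in> R"
        using W cl strict that unfolding R_def strict_fun_def by force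
    qed
    have B: "\<forall>(a, b)\<in>R. a = bottom L \<longleftrightarrow> b = bottom L" if "s = WithSeq"
      using that strict total unfolding R_def strict_fun_def total_fun_def by auto
    show ?thesis unfolding allowed_def using A B by blast
  qed
  have p: "(id1, g) \<in> rel L s ?\<rho> (TFun \<tau>1 (TVar 0))"
  proof -
    have "(app L id1 a, app L g b) \<in> R" if "(a, b) \<in> rel L s ?\<rho> \<tau>1" for a b
    proof -
      have "a = b" using eqc cl that by blast
      moreover have "a \<in> vals L s \<tau>1" using that r1 \<open>a = b\<close> by (auto simp: vals_def)
      ultimately show ?thesis using id1 by (auto simp: R_def)
    qed
    then show ?thesis using total by auto
  qed
  have q: "(g, id2) \<in> rel L s ?\<rho> (TFun (TVar 0) \<tau>2)"
  proof -
    have "(app L g a, app L id2 b) \<in> rel L s ?\<rho> \<tau>2" if "(a, b) \<in> R" for a b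
    proof -
      from that obtain x where x: "x \<in> vals L s \<tau>1" "a = x" "b = app L g x"
        by (auto simp: R_def)
      have bv: "b \<in> vals L s \<tau>2" using x gapp by auto
      then have "app L id2 b = b" using id2 by auto
      then show ?thesis using bv x r2 by (auto simp: vals_def)
    qed
    then show ?thesis using total by auto
  qed
  have "(E \<tau>1 id1 g, E \<tau>2 g id2) \<in> rel L s ?\<rho> \<tau>"
    using param cl sub allowed p q unfolding parametric_term_def by blast
  then show ?thesis using eqc cl by blast
qed

end
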